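(* For $1\le\ell\le r$ let \[ F_\ell(n)=z_\ell^n\prod_{\nu=1}^{m_\ell}(a_{\ell,\nu}n+b_{\ell,\nu})^{q_{\ell,\nu}}\prod_{j=1}^{h_\ell}\mathcal G_{\Gamma_{\ell,j}}(n)^{e_{\ell,j}}, \] with $z_\ell,a_{\ell,\nu},b_{\ell,\nu},q_{\ell,\nu}\in\mathbb C$, $e_{\ell,j}\in\mathbb Z_{\ge0}$ and words $\Gamma_{\ell,j}$ in affine letters, where the affine factors are nonzero on the relevant positive integers and branches for all complex powers are fixed. Then for every positive integer $k$, \[ \sum_{n_r=1}^{k}\sum_{n_{r-1}=1}^{n_r}\cdots\sum_{n_1=1}^{n_2}\prod_{\ell=1}^{r}F_\ell(n_\ell)\in\operatorname{span}_{\mathbb C}\{\mathcal G_\Gamma(k)\}_\Gamma, \] where $\Gamma$ ranges over words in affine letters.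
   Context: An affine letter is a triple $L=(\boldsymbol\rho,\sigma,\mathbf A)$ with $\boldsymbol\rho=(\rho_1,\ldots,\rho_t)\in\mathbb C^t$, $\sigma\in\mathbb C$, $\mathbf A=((a_1,b_1),\ldots,(a_t,b_t))$, $a_\nu,b_\nu\in\mathbb C$; its value at a positive integer $n$ is $L(n)=\sigma^n\prod_{\nu}(a_\nu n+b_\nu)^{-\rho_\nu}$ (branches fixed, factors nonzero on the relevant range). For a word $\Gamma=(L_1,\ldots,L_d)$ of affine letters, $\mathcal G_\Gamma(N)=\sum_{N\ge n_1>\cdots>n_d\ge1}\prod_jL_j(n_j)$, $\mathcal G_\emptyset(N)=1$. *)

theory Defs
  imports "HOL-Analysis.Analysis"
begin

(* An affine letter L = (rho, sigma, A) with rho = (rho_1..rho_t), A = ((a_1,b_1)..(a_t,b_t)).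
   Complex powers use the principal branch (Isabelle's complex powr). *)
type_synonym letter = "complex list \<times> complex \<times> (complex \<times> complex) list"

definition lrho :: "letter \<Rightarrow> complex list" where "lrho L = fst L"
definition lsigma :: "letter \<Rightarrow> complex" where "lsigma L = fst (snd L)"
definition lA :: "letter \<Rightarrow> (complex \<times> complex) list" where "lA L = snd (snd L)"

definition letter_val :: "letter \<Rightarrow> nat \<Rightarrow> complex" where
  "letter_val L n = lsigma L ^ n * (\<Prod>\<nu><length (lrho L).
        (fst (lA L ! \<nu>) * of_nat n + snd (lA L ! \<nu>)) powr (- (lrho L ! \<nu>)))"

definition wf_letter :: "letter \<Rightarrow> bool" where
  "wf_letter L = (length (lrho L) = length (lA L) \<and>
     (\<forall>n::nat. n \<ge> 1 \<longrightarrow> (\<forall>p\<in>set (lA L). fst p * of_nat n + snd p \<noteq> 0)))"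

definition wf_word :: "letter list \<Rightarrow> bool" where
  "wf_word \<Gamma> = (\<forall>L\<in>set \<Gamma>. wf_letter L)"

definition G :: "letter list \<Rightarrow> nat \<Rightarrow> complex" where
  "G \<Gamma> N = (\<Sum>ns \<in> {ns. length ns = length \<Gamma> \<and> sorted_wrt (>) ns \<and> set ns \<subseteq> {1..N}}.
      \<Prod>j<length \<Gamma>. letter_val (\<Gamma> ! j) (ns ! j))"

(* A factor F(n) = z^n * prod_nu (a_nu n + b_nu)^(q_nu) * prod_j G_{Gamma_j}(n)^(e_j),
   given as (z, [(a_nu,b_nu,q_nu)], [(Gamma_j, e_j)]). *)
type_synonym factor = "complex \<times> (complex \<times> complex \<times> complex) list \<times> (letter list \<times> nat) list"

definition fz :: "factor \<Rightarrow> complex" where "fz F = fst F"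
definition fabq :: "factor \<Rightarrow> (complex \<times> complex \<times> complex) list" where "fabq F = fst (snd F)"
definition fge :: "factor \<Rightarrow> (letter list \<times> nat) list" where "fge F = snd (snd F)"

definition factor_val :: "factor \<Rightarrow> nat \<Rightarrow> complex" where
  "factor_val F n = fz F ^ n
     * (\<Prod>\<nu><length (fabq F). (fst (fabq F ! \<nu>) * of_nat n + fst (snd (fabq F ! \<nu>)))
                                   powr (snd (snd (fabq F ! \<nu>))))
     * (\<Prod>j<length (fge F). G (fst (fge F ! j)) n ^ snd (fge F ! j))"

definition wf_factor :: "factor \<Rightarrow> bool" where
  "wf_factor F =
     ((\<forall>n::nat. n \<ge> 1 \<longrightarrow> (\<forall>p\<in>set (fabq F). fst p * of_nat n + fst (snd p) \<noteq> 0)) \<and>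
      (\<forall>ge\<in>set (fge F). wf_word (fst ge)))"

(* sum_{n_r=1}^k sum_{n_{r-1}=1}^{n_r} ... sum_{n_1=1}^{n_2} prod_l F_l(n_l),
   with ns ! (l-1) = n_l, i.e. 1 <= n_1 <= ... <= n_r <= k *)
definition nested_sum :: "factor list \<Rightarrow> nat \<Rightarrow> complex" where
  "nested_sum Fs k = (\<Sum>ns \<in> {ns. length ns = length Fs \<and> sorted ns \<and> set ns \<subseteq> {1..k}}.
      \<Prod>l<length Fs. factor_val (Fs ! l) (ns ! l))"

end

theory Submission
  imports Defs
begin

lemma prod_split_add: fixes m k :: nat shows "(\<Prod>\<nu><m+k. g \<nu>) = (\<Prod>\<nu><m. g \<nu>) * (\<Prod>\<nu><k. g (m+\<nu>) :: complex)"
  by (induct k) (simp_all add: mult.assoc)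

definition lmul :: "letter \<Rightarrow> letter \<Rightarrow> letter" where
  "lmul L M = (lrho L @ lrho M, lsigma L * lsigma M, lA L @ lA M)"

lemma lmul_parts: "lrho (lmul L M) = lrho L @ lrho M" "lsigma (lmul L M) = lsigma L * lsigma M"
  "lA (lmul L M) = lA L @ lA M"
  by (simp_all add: lmul_def lrho_def lsigma_def lA_def)

lemma letter_val_lmul:
  assumes "wf_letter L" "wf_letter M"
  shows "letter_val (lmul L M) n = letter_val L n * letter_val M n"
proof -
  have l1: "length (lrho L) = length (lA L)" and l2: "length (lrho M) = length (lA M)"
    using assms by (auto simp: wf_letter_def)
  show ?thesis
    unfolding letter_val_def lmul_parts
    by (simp add: prod_split_add nth_append l1 power_mult_distrib mult_ac)
qed

lemma wf_lmul: "wf_letter L \<Longrightarrow> wf_letter M \<Longrightarrow> wf_letter (lmul L M)"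
  by (auto simp: wf_letter_def lmul_parts)

definition Gset :: "nat \<Rightarrow> nat \<Rightarrow> nat list set" where
  "Gset d N = {ns. length ns = d \<and> sorted_wrt (>) ns \<and> set ns \<subseteq> {1..N}}"

lemma finite_Gset: "finite (Gset d N)"
  by (rule finite_subset[OF _ finite_lists_length_eq[OF finite_atLeastAtMost[of 1 N], of d]])
     (auto simp: Gset_def)

lemma Gset_Suc: "Gset (Suc d) N = (\<lambda>(n,ns). n#ns) ` (SIGMA n:{1..N}. Gset d (n-1))"
  unfolding Gset_def
  by (auto simp: length_Suc_conv image_iff subset_iff) force+

lemma G_Nil[simp]: "G [] N = 1"
proof -
  have "{ns::nat list. length ns = 0 \<and> sorted_wrt (>) ns \<and> set ns \<subseteq> {1..N}} = {[]}" by auto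
  then show ?thesis by (simp add: G_def)
qed

lemma G_Cons: "G (L#\<Gamma>) N = (\<Sum>n\<in>{1..N}. letter_val L n * G \<Gamma> (n-1))"
proof -
  have "G (L#\<Gamma>) N = (\<Sum>ns\<in>Gset (Suc (length \<Gamma>)) N. \<Prod>j<Suc (length \<Gamma>). letter_val ((L#\<Gamma>) ! j) (ns ! j))"
    by (simp add: G_def Gset_def)
  also have "\<dots> = (\<Sum>p\<in>(SIGMA n:{1..N}. Gset (length \<Gamma>) (n-1)). \<Prod>j<Suc (length \<Gamma>). letter_val ((L#\<Gamma>) ! j) ((fst p # snd p) ! j))"
    unfolding Gset_Suc
    by (subst sum.reindex) (auto simp: inj_on_def case_prod_beta)
  also have "\<dots> = (\<Sum>n\<in>{1..N}. \<Sum>ns\<in>Gset (length \<Gamma>) (n-1). \<Prod>j<Suc (length \<Gamma>). letter_val ((L#\<Gamma>) ! j) ((n # ns) ! j))"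
    by (subst sum.Sigma) (auto simp: finite_Gset split_def)
  also have "\<dots> = (\<Sum>n\<in>{1..N}. letter_val L n * G \<Gamma> (n-1))"
    by (simp only: prod.lessThan_Suc_shift) (simp add: G_def Gset_def sum_distrib_left)
  finally show ?thesis .
qed

lemma G_Cons_0[simp]: "G (L#\<Gamma>) 0 = 0"
  by (simp add: G_Cons)

lemma G_Suc: "G (L#\<Gamma>) (Suc N) = G (L#\<Gamma>) N + letter_val L (Suc N) * G \<Gamma> N"
  by (simp add: G_Cons)

definition Nset :: "nat \<Rightarrow> nat \<Rightarrow> nat list set" where
  "Nset d k = {ns. length ns = d \<and> sorted ns \<and> set ns \<subseteq> {1..k}}"

lemma finite_Nset: "finite (Nset d N)"
  by (rule finite_subset[OF _ finite_lists_length_eq[OF finite_atLeastAtMost[of 1 N], of d]])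
     (auto simp: Nset_def)

lemma Nset_Suc: "Nset (Suc d) k = (\<lambda>(n,ns). ns@[n]) ` (SIGMA n:{1..k}. Nset d n)"
  unfolding Nset_def
  by (auto simp: length_Suc_conv_rev image_iff subset_iff sorted_append)

lemma nested_Nil: "nested_sum [] k = 1"
proof -
  have "{ns::nat list. length ns = 0 \<and> sorted ns \<and> set ns \<subseteq> {1..k}} = {[]}" by auto
  then show ?thesis by (simp add: nested_sum_def)
qed

lemma nested_snoc: "nested_sum (Fs@[F]) k = (\<Sum>n\<in>{1..k}. nested_sum Fs n * factor_val F n)"
proof -
  have "nested_sum (Fs@[F]) k = (\<Sum>ns\<in>Nset (Suc (length Fs)) k. \<Prod>l<Suc (length Fs). factor_val ((Fs@[F]) ! l) (ns ! l))"
    by (simp add: nested_sum_def Nset_def)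
  also have "\<dots> = (\<Sum>p\<in>(SIGMA n:{1..k}. Nset (length Fs) n). \<Prod>l<Suc (length Fs). factor_val ((Fs@[F]) ! l) ((snd p @ [fst p]) ! l))"
    unfolding Nset_Suc
    by (subst sum.reindex) (auto simp: inj_on_def case_prod_beta)
  also have "\<dots> = (\<Sum>n\<in>{1..k}. \<Sum>ns\<in>Nset (length Fs) n. \<Prod>l<Suc (length Fs). factor_val ((Fs@[F]) ! l) ((ns @ [n]) ! l))"
    by (subst sum.Sigma) (auto simp: finite_Nset split_def)
  also have "\<dots> = (\<Sum>n\<in>{1..k}. \<Sum>ns\<in>Nset (length Fs) n. (\<Prod>l<length Fs. factor_val (Fs ! l) (ns ! l)) * factor_val F n)"
    by (intro sum.cong refl) (auto simp: Nset_def prod.lessThan_Suc nth_append intro!: prod.cong)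
  also have "\<dots> = (\<Sum>n\<in>{1..k}. nested_sum Fs n * factor_val F n)"
    by (simp add: nested_sum_def Nset_def sum_distrib_right)
  finally show ?thesis .
qed

definition inV :: "(nat \<Rightarrow> complex) \<Rightarrow> bool" where
  "inV f \<longleftrightarrow> (\<exists>S c. finite S \<and> (\<forall>\<Gamma>\<in>S. wf_word \<Gamma>) \<and> (\<forall>k. f k = (\<Sum>\<Gamma>\<in>S. c \<Gamma> * G \<Gamma> k)))"

lemma inV_cong: "inV f \<Longrightarrow> (\<And>k. f k = g k) \<Longrightarrow> inV g"
proof -
  assume "inV f" "\<And>k. f k = g k"
  then have "f = g" by auto
  with \<open>inV f\<close> show ?thesis by simp
qed

lemma inV_G: "wf_word \<Gamma> \<Longrightarrow> inV (G \<Gamma>)"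
  unfolding inV_def by (rule exI[of _ "{\<Gamma>}"], rule exI[of _ "\<lambda>_. 1"]) auto

lemma inV_0: "inV (\<lambda>k. 0)"
  unfolding inV_def by (rule exI[of _ "{}"]) auto

lemma inV_scale: "inV f \<Longrightarrow> inV (\<lambda>k. a * f k)"
  unfolding inV_def
  apply (elim exE conjE)
  subgoal for S c
    by (rule exI[of _ S], rule exI[of _ "\<lambda>\<Gamma>. a * c \<Gamma>"]) (simp add: sum_distrib_left mult.assoc)
  done

lemma inV_add: "inV f \<Longrightarrow> inV g \<Longrightarrow> inV (\<lambda>k. f k + g k)"
  unfolding inV_def
proof (elim exE conjE)
  fix S1 c1 S2 c2
  assume S1: "finite S1" "\<forall>\<Gamma>\<in>S1. wf_word \<Gamma>" "\<forall>k. f k = (\<Sum>\<Gamma>\<in>S1. c1 \<Gamma> * G \<Gamma> k)"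
    and S2: "finite S2" "\<forall>\<Gamma>\<in>S2. wf_word \<Gamma>" "\<forall>k. g k = (\<Sum>\<Gamma>\<in>S2. c2 \<Gamma> * G \<Gamma> k)"
  define c where "c \<Gamma> = (if \<Gamma> \<in> S1 then c1 \<Gamma> else 0) + (if \<Gamma> \<in> S2 then c2 \<Gamma> else 0)" for \<Gamma>
  have e1: "(\<Sum>\<Gamma>\<in>S1 \<union> S2. (if \<Gamma> \<in> S1 then c1 \<Gamma> else 0) * G \<Gamma> k) = (\<Sum>\<Gamma>\<in>S1. c1 \<Gamma> * G \<Gamma> k)" for k
    by (rule sum.mono_neutral_cong_right) (use S1 S2 in auto)
  have e2: "(\<Sum>\<Gamma>\<in>S1 \<union> S2. (if \<Gamma> \<in> S2 then c2 \<Gamma> else 0) * G \<Gamma> k) = (\<Sum>\<Gamma>\<in>S2. c2 \<Gamma> * G \<Gamma> k)" for k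
    by (rule sum.mono_neutral_cong_right) (use S1 S2 in auto)
  show "\<exists>S c. finite S \<and> (\<forall>\<Gamma>\<in>S. wf_word \<Gamma>) \<and> (\<forall>k. f k + g k = (\<Sum>\<Gamma>\<in>S. c \<Gamma> * G \<Gamma> k))"
    apply (rule exI[of _ "S1 \<union> S2"], rule exI[of _ c])
    using S1 S2 e1 e2 by (simp add: c_def distrib_right sum.distrib) blast
qed

lemma inV_sum: "finite I \<Longrightarrow> (\<And>i. i \<in> I \<Longrightarrow> inV (h i)) \<Longrightarrow> inV (\<lambda>k. \<Sum>i\<in>I. h i k)"
proof (induction I rule: finite_induct)
  case empty
  then show ?case using inV_0 by simp
next
  case (insert x F)
  then have "inV (\<lambda>k. h x k + (\<Sum>i\<in>F. h i k))" by (intro inV_add) auto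
  then show ?case using insert by simp
qed

lemma inV_via:
  assumes "inV f"
    and "\<And>S c. finite S \<Longrightarrow> \<forall>\<Gamma>\<in>S. wf_word \<Gamma> \<Longrightarrow> (\<And>k. f k = (\<Sum>\<Gamma>\<in>S. c \<Gamma> * G \<Gamma> k)) \<Longrightarrow> inV g"
  shows "inV g"
proof -
  from assms(1) obtain S c where "finite S" "\<forall>\<Gamma>\<in>S. wf_word \<Gamma>" "\<forall>k. f k = (\<Sum>\<Gamma>\<in>S. c \<Gamma> * G \<Gamma> k)"
    unfolding inV_def by blast
  then show ?thesis using assms(2) by blast
qed

lemma inV_lin:
  assumes "finite S" "\<And>\<Gamma>. \<Gamma> \<in> S \<Longrightarrow> inV (h \<Gamma>)" "\<And>k. g k = (\<Sum>\<Gamma>\<in>S. c \<Gamma> * h \<Gamma> k)"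
  shows "inV g"
  by (rule inV_cong[OF inV_sum[OF assms(1), of "\<lambda>\<Gamma> k. c \<Gamma> * h \<Gamma> k"]])
     (use assms inV_scale in auto)

lemma swap_lemma:
  "(\<Sum>n\<in>{1..k}. (l n::complex) * (\<Sum>\<Gamma>\<in>S. c \<Gamma> * g \<Gamma> n)) = (\<Sum>\<Gamma>\<in>S. c \<Gamma> * (\<Sum>n\<in>{1..k}. l n * g \<Gamma> n))"
proof -
  have "(\<Sum>n\<in>{1..k}. (l n::complex) * (\<Sum>\<Gamma>\<in>S. c \<Gamma> * g \<Gamma> n)) = (\<Sum>n\<in>{1..k}. \<Sum>\<Gamma>\<in>S. c \<Gamma> * (l n * g \<Gamma> n))"
    by (simp add: sum_distrib_left mult.left_commute)
  also have "\<dots> = (\<Sum>\<Gamma>\<in>S. \<Sum>n\<in>{1..k}. c \<Gamma> * (l n * g \<Gamma> n))"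
    by (rule sum.swap)
  also have "\<dots> = (\<Sum>\<Gamma>\<in>S. c \<Gamma> * (\<Sum>n\<in>{1..k}. l n * g \<Gamma> n))"
    by (simp add: sum_distrib_left)
  finally show ?thesis .
qed

lemma inV_strict:
  assumes "inV f" "wf_letter L"
  shows "inV (\<lambda>k. \<Sum>n\<in>{1..k}. letter_val L n * f (n-1))"
  using assms(1)
proof (rule inV_via)
  fix S c assume S: "finite S" "\<forall>\<Gamma>\<in>S. wf_word \<Gamma>" "\<And>k. f k = (\<Sum>\<Gamma>\<in>S. c \<Gamma> * G \<Gamma> k)"
  show ?thesis
  proof (rule inV_lin[OF S(1), of "\<lambda>\<Gamma>. G (L#\<Gamma>)"])
    show "inV (G (L#\<Gamma>))" if "\<Gamma> \<in> S" for \<Gamma>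
      using that S assms by (intro inV_G) (auto simp: wf_word_def)
    show "(\<Sum>n\<in>{1..k}. letter_val L n * f (n-1)) = (\<Sum>\<Gamma>\<in>S. c \<Gamma> * G (L#\<Gamma>) k)" for k
      unfolding S(3) G_Cons by (rule swap_lemma[of "letter_val L" c "\<lambda>\<Gamma> n. G \<Gamma> (n-1)" S k])
  qed
qed

lemma inV_ns_G:
  assumes "wf_word \<Gamma>" "wf_letter L"
  shows "inV (\<lambda>k. \<Sum>n\<in>{1..k}. letter_val L n * G \<Gamma> n)"
proof (cases \<Gamma>)
  case Nil
  have "inV (G [L])" using assms by (intro inV_G) (auto simp: wf_word_def)
  then show ?thesis by (rule inV_cong) (simp add: G_Cons Nil)
next
  case (Cons M \<Gamma>')
  have wf: "wf_letter M" "wf_word \<Gamma>'" using assms Cons by (auto simp: wf_word_def)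
  have "inV (\<lambda>k. G (L#\<Gamma>) k + G (lmul L M # \<Gamma>') k)"
    using assms wf wf_lmul by (intro inV_add inV_G) (auto simp: wf_word_def)
  then show ?thesis
  proof (rule inV_cong)
    fix k
    have "(\<Sum>n\<in>{1..k}. letter_val L n * G \<Gamma> n)
        = (\<Sum>n\<in>{1..k}. letter_val L n * G \<Gamma> (n-1) + letter_val (lmul L M) n * G \<Gamma>' (n-1))"
    proof (intro sum.cong refl)
      fix n assume "n \<in> {1..k}"
      then obtain m where n: "n = Suc m" by (cases n) auto
      show "letter_val L n * G \<Gamma> n = letter_val L n * G \<Gamma> (n-1) + letter_val (lmul L M) n * G \<Gamma>' (n-1)"
        by (simp add: n Cons G_Suc letter_val_lmul assms wf algebra_simps)
    qed
    then show "G (L#\<Gamma>) k + G (lmul L M # \<Gamma>') k = (\<Sum>n\<in>{1..k}. letter_val L n * G \<Gamma> n)"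
      by (simp add: G_Cons sum.distrib)
  qed
qed

lemma inV_ns:
  assumes "inV f" "wf_letter L"
  shows "inV (\<lambda>k. \<Sum>n\<in>{1..k}. letter_val L n * f n)"
  using assms(1)
proof (rule inV_via)
  fix S c assume S: "finite S" "\<forall>\<Gamma>\<in>S. wf_word \<Gamma>" "\<And>k. f k = (\<Sum>\<Gamma>\<in>S. c \<Gamma> * G \<Gamma> k)"
  show ?thesis
  proof (rule inV_lin[OF S(1), of "\<lambda>\<Gamma> k. \<Sum>n\<in>{1..k}. letter_val L n * G \<Gamma> n"])
    show "inV (\<lambda>k. \<Sum>n\<in>{1..k}. letter_val L n * G \<Gamma> n)" if "\<Gamma> \<in> S" for \<Gamma>
      using that S assms by (intro inV_ns_G) auto
    show "(\<Sum>n\<in>{1..k}. letter_val L n * f n) = (\<Sum>\<Gamma>\<in>S. c \<Gamma> * (\<Sum>n\<in>{1..k}. letter_val L n * G \<Gamma> n))" for k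
      unfolding S(3) by (rule swap_lemma[of "letter_val L" c "\<lambda>\<Gamma> n. G \<Gamma> n" S k])
  qed
qed

lemma stuffle_identity:
  assumes "wf_letter A" "wf_letter B"
  shows "G (A#D) k * G (B#E) k = (\<Sum>n\<in>{1..k}.
     letter_val A n * (G D (n-1) * G (B#E) (n-1)) + letter_val B n * (G (A#D) (n-1) * G E (n-1))
     + letter_val (lmul A B) n * (G D (n-1) * G E (n-1)))"
proof (induction k)
  case 0
  then show ?case by simp
next
  case (Suc k)
  have e: "(\<Sum>n\<in>{1..Suc k}. t n) = (\<Sum>n\<in>{1..k}. t n) + t (Suc k)" for t :: "nat \<Rightarrow> complex"
    by simp
  show ?case
    unfolding e Suc.IH[symmetric] by (simp add: G_Suc letter_val_lmul assms algebra_simps)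
qed

lemma inV_stuffle: "wf_word D \<Longrightarrow> wf_word E \<Longrightarrow> inV (\<lambda>k. G D k * G E k)"
proof (induction "length D + length E" arbitrary: D E rule: less_induct)
  case less
  show ?case
  proof (cases D)
    case Nil
    then show ?thesis using inV_G[OF less.prems(2)] by simp
  next
    case (Cons A D')
    show ?thesis
    proof (cases E)
      case Nil
      then show ?thesis using inV_G[OF less.prems(1)] by simp
    next
      case (Cons B E')
      note DC = \<open>D = A # D'\<close>
      have wf: "wf_letter A" "wf_word D'" "wf_letter B" "wf_word E'"
        using less.prems DC Cons by (auto simp: wf_word_def)
      have i1: "inV (\<lambda>k. G D' k * G E k)" using less.hyps[of D' E] DC wf less.prems by simp
      have i2: "inV (\<lambda>k. G D k * G E' k)" using less.hyps[of D E'] Cons wf less.prems by simp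
      have i3: "inV (\<lambda>k. G D' k * G E' k)" using less.hyps[of D' E'] DC Cons wf by simp
      have "inV (\<lambda>k. (\<Sum>n\<in>{1..k}. letter_val A n * (G D' (n-1) * G E (n-1)))
                  + (\<Sum>n\<in>{1..k}. letter_val B n * (G D (n-1) * G E' (n-1)))
                  + (\<Sum>n\<in>{1..k}. letter_val (lmul A B) n * (G D' (n-1) * G E' (n-1))))"
        by (intro inV_add inV_strict[OF i1] inV_strict[OF i2] inV_strict[OF i3] wf wf_lmul)
      then show ?thesis
        by (rule inV_cong) (simp add: DC Cons stuffle_identity wf sum.distrib)
    qed
  qed
qed

lemma inV_multG:
  assumes "inV f" "wf_word D"
  shows "inV (\<lambda>k. G D k * f k)"
  using assms(1)
proof (rule inV_via)
  fix S c assume S: "finite S" "\<forall>\<Gamma>\<in>S. wf_word \<Gamma>" "\<And>k. f k = (\<Sum>\<Gamma>\<in>S. c \<Gamma> * G \<Gamma> k)"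
  show ?thesis
  proof (rule inV_lin[OF S(1), of "\<lambda>\<Gamma> k. G D k * G \<Gamma> k"])
    show "inV (\<lambda>k. G D k * G \<Gamma> k)" if "\<Gamma> \<in> S" for \<Gamma>
      using that S assms by (intro inV_stuffle) auto
    show "G D k * f k = (\<Sum>\<Gamma>\<in>S. c \<Gamma> * (G D k * G \<Gamma> k))" for k
      by (simp add: S(3) sum_distrib_left mult_ac)
  qed
qed

lemma inV_powG: "inV f \<Longrightarrow> wf_word D \<Longrightarrow> inV (\<lambda>k. G D k ^ e * f k)"
proof (induction e)
  case 0
  then show ?case by simp
next
  case (Suc e)
  have "inV (\<lambda>k. G D k * (G D k ^ e * f k))" using Suc by (intro inV_multG) auto
  then show ?case by (simp add: mult.assoc)
qed

lemma inV_Gprod: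
  "inV f \<Longrightarrow> \<forall>ge\<in>set ges. wf_word (fst ge) \<Longrightarrow>
   inV (\<lambda>k. (\<Prod>j<length ges. G (fst (ges!j)) k ^ snd (ges!j)) * f k)"
proof (induction ges)
  case Nil
  then show ?case by simp
next
  case (Cons ge ges)
  have "inV (\<lambda>k. G (fst ge) k ^ snd ge * ((\<Prod>j<length ges. G (fst (ges!j)) k ^ snd (ges!j)) * f k))"
    using Cons by (intro inV_powG) auto
  then show ?case by (simp add: prod.lessThan_Suc_shift mult.assoc del: prod.lessThan_Suc)
qed

definition fletter :: "factor \<Rightarrow> letter" where
  "fletter F = (map (\<lambda>p. - snd (snd p)) (fabq F), fz F, map (\<lambda>p. (fst p, fst (snd p))) (fabq F))"

lemma fletter_wf: "wf_factor F \<Longrightarrow> wf_letter (fletter F)"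
  by (auto simp: wf_factor_def wf_letter_def fletter_def lrho_def lA_def)

lemma factor_val_split:
  "factor_val F n = letter_val (fletter F) n * (\<Prod>j<length (fge F). G (fst (fge F ! j)) n ^ snd (fge F ! j))"
  by (simp add: factor_val_def letter_val_def fletter_def lrho_def lA_def lsigma_def)

lemma inV_nested: "\<forall>F\<in>set Fs. wf_factor F \<Longrightarrow> inV (nested_sum Fs)"
proof (induction Fs rule: rev_induct)
  case Nil
  show ?case by (rule inV_cong[OF inV_G[of "[]"]]) (auto simp: wf_word_def nested_Nil)
next
  case (snoc F Fs)
  then have wfF: "wf_factor F" and IH: "inV (nested_sum Fs)" by auto
  have "inV (\<lambda>k. \<Sum>n\<in>{1..k}. letter_val (fletter F) n *
           ((\<Prod>j<length (fge F). G (fst (fge F ! j)) n ^ snd (fge F ! j)) * nested_sum Fs n))"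
    using wfF by (intro inV_ns inV_Gprod IH fletter_wf) (auto simp: wf_factor_def)
  then show ?case
    by (rule inV_cong) (simp add: nested_snoc factor_val_split mult_ac)
qed

theorem corollary7p3:
  fixes Fs :: "factor list"
  assumes "length Fs \<ge> 1"
    and "\<forall>F\<in>set Fs. wf_factor F"
  shows "\<exists>S :: letter list set. \<exists>c :: letter list \<Rightarrow> complex.
           finite S \<and> (\<forall>\<Gamma>\<in>S. wf_word \<Gamma>) \<and>
           (\<forall>k::nat. k \<ge> 1 \<longrightarrow> nested_sum Fs k = (\<Sum>\<Gamma>\<in>S. c \<Gamma> * G \<Gamma> k))"
  using inV_nested[OF assms(2)] unfolding inV_def by blast

end
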